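(* Let $n\ge1$, $\boldsymbol z\in\{0,1\}^n$, and $\boldsymbol y,\boldsymbol y'\in\overline{\mathbb R}^n$ with $y_i\le y_i'$ if $z_i=1$ and $y_i\ge y_i'$ if $z_i=0$. Let $a,b>0$, $\gamma=\min(\{y_i:y_i\in\mathbb R\}\cup\{y_i':y_i'\in\mathbb R\})-a$ and $\zeta=\max(\{y_i:y_i\in\mathbb R\}\cup\{y_i':y_i'\in\mathbb R\})+b$, and define $\tilde{\boldsymbol y},\tilde{\boldsymbol y}'\in\mathbb R^n$ by replacing each coordinate equal to $-\infty$ by $\gamma$ and each coordinate equal to $+\infty$ by $\zeta$ (real coordinates unchanged). Then, for the rank-sum statistic $t_{\mathrm R,\phi}$: (a) $\tilde y_i\le\tilde y_i'$ if $z_i=1$ and $\tilde y_i\ge\tilde y_i'$ if $z_i=0$; (b) $t_{\mathrm R,\phi}(\boldsymbol z,\boldsymbol y)=t_{\mathrm R,\phi}(\boldsymbol z,\tilde{\boldsymbol y})$ and $t_{\mathrm R,\phi}(\boldsymbol z,\boldsymbol y')=t_{\mathrm R,\phi}(\boldsymbol z,\tilde{\boldsymbol y}')$; (c) $t_{\mathrm R,\phi}(\boldsymbol z,\boldsymbol y)\le t_{\mathrm R,\phi}(\boldsymbol z,\boldsymbol y')$.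
   Context: $\overline{\mathbb R}=\mathbb R\cup\{\pm\infty\}$. For $1\le i,j\le n$ and $y,y'\in\overline{\mathbb R}$, $\psi_{i,j}(y,y')=\mathbf 1\{y>y'\}+\mathbf 1\{y=y'\}\mathbf 1\{i\ge j\}$; $\mathrm{rank}_i(\boldsymbol y)=\sum_{j=1}^n\psi_{i,j}(y_i,y_j)$. $\phi$ is a fixed nondecreasing real function on the nonnegative integers. Rank-sum statistic: $t_{\mathrm R,\phi}(\boldsymbol z,\boldsymbol y)=\sum_{i=1}^nz_i\phi(\mathrm{rank}_i(\boldsymbol y))$. *)

theory Defs
  imports Complex_Main "HOL-Library.Extended_Real"
begin

text \<open>Vectors are indexed by 1..n, represented as functions on nat.\<close>

definition psi :: "nat \<Rightarrow> nat \<Rightarrow> 'a::linorder \<Rightarrow> 'a \<Rightarrow> nat" where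
  "psi i j u v = (if u > v then 1 else 0) + (if u = v \<and> i \<ge> j then 1 else 0)"

definition rank :: "nat \<Rightarrow> (nat \<Rightarrow> 'a::linorder) \<Rightarrow> nat \<Rightarrow> nat" where
  "rank n y i = (\<Sum>j = 1..n. psi i j (y i) (y j))"

definition t_R :: "(nat \<Rightarrow> real) \<Rightarrow> nat \<Rightarrow> (nat \<Rightarrow> real) \<Rightarrow> (nat \<Rightarrow> 'a::linorder) \<Rightarrow> real" where
  "t_R \<phi> n z y = (\<Sum>i = 1..n. z i * \<phi> (rank n y i))"

definition finite_vals :: "nat \<Rightarrow> (nat \<Rightarrow> ereal) \<Rightarrow> (nat \<Rightarrow> ereal) \<Rightarrow> real set" where
  "finite_vals n y y' =
     {real_of_ereal (y i) | i. i \<in> {1..n} \<and> \<bar>y i\<bar> \<noteq> \<infinity>} \<union>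
     {real_of_ereal (y' i) | i. i \<in> {1..n} \<and> \<bar>y' i\<bar> \<noteq> \<infinity>}"

text \<open>Convention: min/max of the empty set taken to be 0.\<close>
definition gamma_lo :: "nat \<Rightarrow> (nat \<Rightarrow> ereal) \<Rightarrow> (nat \<Rightarrow> ereal) \<Rightarrow> real \<Rightarrow> real" where
  "gamma_lo n y y' a =
     (if finite_vals n y y' = {} then 0 else Min (finite_vals n y y')) - a"

definition zeta_hi :: "nat \<Rightarrow> (nat \<Rightarrow> ereal) \<Rightarrow> (nat \<Rightarrow> ereal) \<Rightarrow> real \<Rightarrow> real" where
  "zeta_hi n y y' b =
     (if finite_vals n y y' = {} then 0 else Max (finite_vals n y y')) + b"

definition replace_inf :: "real \<Rightarrow> real \<Rightarrow> (nat \<Rightarrow> ereal) \<Rightarrow> nat \<Rightarrow> real" where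
  "replace_inf \<gamma> \<zeta> y i =
     (if y i = -\<infinity> then \<gamma> else if y i = \<infinity> then \<zeta> else real_of_ereal (y i))"

end

theory Submission
  imports Defs
begin

lemma psi_anti:
  fixes u v v' :: "'a::linorder"
  assumes "v \<le> v'" shows "psi i k u v' \<le> psi i k u v"
  using assms unfolding psi_def by auto

lemma rank_card:
  "rank n y i = card {j\<in>{1..n}. y j < y i \<or> (y j = y i \<and> j \<le> i)}"
proof -
  have "rank n y i = (\<Sum>j = 1..n. if y j < y i \<or> (y j = y i \<and> j \<le> i) then 1 else 0)"
    unfolding rank_def psi_def by (intro sum.cong) auto
  also have "\<dots> = (\<Sum>j\<in>{j\<in>{1..n}. y j < y i \<or> (y j = y i \<and> j \<le> i)}. 1)"
    by (rule sum.inter_filter[symmetric]) simp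
  also have "\<dots> = card {j\<in>{1..n}. y j < y i \<or> (y j = y i \<and> j \<le> i)}"
    by simp
  finally show ?thesis .
qed

lemma rank_bij:
  fixes y :: "nat \<Rightarrow> 'a::linorder"
  shows "bij_betw (rank n y) {1..n} {1..n}"
proof -
  define L where "L i = {j\<in>{1..n}. y j < y i \<or> (y j = y i \<and> j \<le> i)}" for i
  have rk: "rank n y i = card (L i)" for i unfolding L_def by (rule rank_card)
  have lt: "card (L i) < card (L j)" if "i \<in> {1..n}" "j \<in> {1..n}" "i \<noteq> j"
      "y i < y j \<or> (y i = y j \<and> i \<le> j)" for i j
  proof -
    have "L i \<subset> L j"
    proof
      show "L i \<subseteq> L j" using that unfolding L_def by auto
      show "L i \<noteq> L j"
      proof
        assume "L i = L j"
        moreover have "j \<in> L j" using that unfolding L_def by auto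
        ultimately have "j \<in> L i" by simp
        then show False using that unfolding L_def by auto
      qed
    qed
    then show ?thesis by (intro psubset_card_mono) (auto simp: L_def)
  qed
  have inj: "inj_on (rank n y) {1..n}"
  proof (rule inj_onI)
    fix i j assume ij: "i \<in> {1..n}" "j \<in> {1..n}" "rank n y i = rank n y j"
    show "i = j"
    proof (rule ccontr)
      assume "i \<noteq> j"
      have "y i < y j \<or> (y i = y j \<and> i \<le> j) \<or> y j < y i \<or> (y j = y i \<and> j \<le> i)"
        by auto
      then show False using lt[of i j] lt[of j i] ij \<open>i \<noteq> j\<close> rk by force
    qed
  qed
  have sub: "rank n y ` {1..n} \<subseteq> {1..n}"
  proof
    fix r assume "r \<in> rank n y ` {1..n}"
    then obtain i where i: "i \<in> {1..n}" "r = card (L i)" using rk by auto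
    have "i \<in> L i" using i unfolding L_def by auto
    moreover have "finite (L i)" by (simp add: L_def)
    ultimately have "card (L i) > 0" using card_gt_0_iff by blast
    then have "1 \<le> card (L i)" by simp
    moreover have "card (L i) \<le> n"
    proof -
      have "card (L i) \<le> card {1..n}" by (intro card_mono) (auto simp: L_def)
      then show ?thesis by simp
    qed
    ultimately show "r \<in> {1..n}" using i by auto
  qed
  have "rank n y ` {1..n} = {1..n}" using endo_inj_surj[OF _ sub inj] by simp
  then show ?thesis using inj unfolding bij_betw_def by simp
qed

lemma sum_phi_rank:
  fixes y :: "nat \<Rightarrow> 'a::linorder"
  shows "(\<Sum>i=1..n. \<phi> (rank n y i)) = (\<Sum>r=1..n. \<phi> r)"
  using sum.reindex_bij_betw[OF rank_bij[of n y], of \<phi>] by simp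

lemma t_R_alt:
  fixes y :: "nat \<Rightarrow> 'a::linorder"
  shows "t_R \<phi> n z y = (\<Sum>r=1..n. \<phi> r) - (\<Sum>i=1..n. (1 - z i) * \<phi> (rank n y i))"
proof -
  have "(\<Sum>i=1..n. (1 - z i) * \<phi> (rank n y i))
      = (\<Sum>i=1..n. \<phi> (rank n y i)) - (\<Sum>i=1..n. z i * \<phi> (rank n y i))"
    by (simp add: algebra_simps sum_subtractf)
  then show ?thesis unfolding t_R_def sum_phi_rank by simp
qed

lemma rank_upd_le:
  fixes w :: "nat \<Rightarrow> 'a::linorder"
  assumes "i \<noteq> k" "w k \<le> v"
  shows "rank n (w(k := v)) i \<le> rank n w i"
  unfolding rank_def
proof (rule sum_mono)
  fix j assume "j \<in> {1..n}"
  show "psi i j ((w(k := v)) i) ((w(k := v)) j) \<le> psi i j (w i) (w j)"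
    using assms psi_anti[OF assms(2), of i j "w i"] by auto
qed

lemma step:
  fixes w :: "nat \<Rightarrow> 'a::linorder"
  assumes "mono \<phi>" "k \<in> {1..n}" "\<forall>i\<in>{1..n}. z i \<in> {0, 1}"
    and "z k = 1 \<longrightarrow> w k \<le> v" and "z k = 0 \<longrightarrow> v \<le> w k"
  shows "t_R \<phi> n z w \<le> t_R \<phi> n z (w(k := v))"
proof -
  have zk: "z k = 0 \<or> z k = 1" using assms(2,3) by auto
  then show ?thesis
  proof
    assume z0: "z k = 0"
    have "(\<Sum>i=1..n. z i * \<phi> (rank n w i)) \<le> (\<Sum>i=1..n. z i * \<phi> (rank n (w(k := v)) i))"
    proof (rule sum_mono)
      fix i assume i: "i \<in> {1..n}"
      show "z i * \<phi> (rank n w i) \<le> z i * \<phi> (rank n (w(k := v)) i)"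
      proof (cases "i = k")
        case True then show ?thesis using z0 by simp
      next
        case False
        have "rank n ((w(k := v))(k := w k)) i \<le> rank n (w(k := v)) i"
          by (rule rank_upd_le) (use False z0 assms(5) in auto)
        then have "rank n w i \<le> rank n (w(k := v)) i" by simp
        then have "\<phi> (rank n w i) \<le> \<phi> (rank n (w(k := v)) i)"
          using assms(1) by (simp add: monoD)
        moreover have "z i \<ge> 0" using assms(3) i by force
        ultimately show ?thesis by (simp add: mult_left_mono)
      qed
    qed
    then show ?thesis unfolding t_R_def .
  next
    assume z1: "z k = 1"
    have "(\<Sum>i=1..n. (1 - z i) * \<phi> (rank n (w(k := v)) i)) \<le> (\<Sum>i=1..n. (1 - z i) * \<phi> (rank n w i))"
    proof (rule sum_mono)
      fix i assume i: "i \<in> {1..n}"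
      show "(1 - z i) * \<phi> (rank n (w(k := v)) i) \<le> (1 - z i) * \<phi> (rank n w i)"
      proof (cases "i = k")
        case True then show ?thesis using z1 by simp
      next
        case False
        have "rank n (w(k := v)) i \<le> rank n w i"
          by (rule rank_upd_le) (use False z1 assms(4) in auto)
        then have "\<phi> (rank n (w(k := v)) i) \<le> \<phi> (rank n w i)"
          using assms(1) by (simp add: monoD)
        moreover have "1 - z i \<ge> 0" using assms(3) i by force
        ultimately show ?thesis by (simp add: mult_left_mono)
      qed
    qed
    then show ?thesis unfolding t_R_alt by simp
  qed
qed

lemma t_R_cong:
  assumes "\<forall>i\<in>{1..n}. y i = y' i"
  shows "t_R \<phi> n z y = t_R \<phi> n z y'"
  unfolding t_R_def rank_def using assms by (intro sum.cong) auto

lemma t_R_mono: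
  fixes y y' :: "nat \<Rightarrow> 'a::linorder"
  assumes "mono \<phi>" "\<forall>i\<in>{1..n}. z i \<in> {0, 1}"
    and "\<forall>i\<in>{1..n}. z i = 1 \<longrightarrow> y i \<le> y' i"
    and "\<forall>i\<in>{1..n}. z i = 0 \<longrightarrow> y i \<ge> y' i"
  shows "t_R \<phi> n z y \<le> t_R \<phi> n z y'"
proof -
  define W where "W m = (\<lambda>i. if i \<le> m then y' i else y i)" for m
  have "m \<le> n \<Longrightarrow> t_R \<phi> n z (W 0) \<le> t_R \<phi> n z (W m)" for m
  proof (induction m)
    case 0 then show ?case by simp
  next
    case (Suc m)
    have eq: "W (Suc m) = (W m)(Suc m := y' (Suc m))"
      unfolding W_def by (auto simp: fun_eq_iff)
    have "t_R \<phi> n z (W m) \<le> t_R \<phi> n z ((W m)(Suc m := y' (Suc m)))"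
      by (rule step) (use assms Suc.prems in \<open>auto simp: W_def\<close>)
    then show ?case using Suc eq by (metis order_trans Suc_leD)
  qed
  from this[of n] have "t_R \<phi> n z (W 0) \<le> t_R \<phi> n z (W n)" by simp
  moreover have "t_R \<phi> n z (W 0) = t_R \<phi> n z y" by (rule t_R_cong) (auto simp: W_def)
  moreover have "t_R \<phi> n z (W n) = t_R \<phi> n z y'" by (rule t_R_cong) (auto simp: W_def)
  ultimately show ?thesis by simp
qed

lemma t_R_comp:
  fixes y :: "nat \<Rightarrow> 'a::linorder" and g :: "'a \<Rightarrow> 'b::linorder"
  assumes "\<forall>i\<in>{1..n}. \<forall>j\<in>{1..n}. y i < y j \<longrightarrow> g (y i) < g (y j)"
  shows "t_R \<phi> n z (\<lambda>i. g (y i)) = t_R \<phi> n z y"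
  unfolding t_R_def
proof (intro sum.cong refl)
  fix i assume i: "i \<in> {1..n}"
  have "rank n (\<lambda>i. g (y i)) i = rank n y i"
    unfolding rank_def
  proof (intro sum.cong refl)
    fix j assume j: "j \<in> {1..n}"
    have h1: "g (y i) < g (y j)" if "y i < y j" using assms i j that by blast
    have h2: "g (y j) < g (y i)" if "y j < y i" using assms i j that by blast
    have "(g (y j) < g (y i)) = (y j < y i)"
    proof (cases "y j < y i")
      case False
      then consider "y i < y j" | "y i = y j" by fastforce
      then show ?thesis using h1 False by cases auto
    qed (use h2 in auto)
    moreover have "(g (y i) = g (y j)) = (y i = y j)"
    proof (cases "y i = y j")
      case False
      then consider "y i < y j" | "y j < y i" by fastforce
      then show ?thesis using h1 h2 by cases auto
    qed auto
    ultimately show "psi i j (g (y i)) (g (y j)) = psi i j (y i) (y j)"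
      unfolding psi_def by simp
  qed
  then show "z i * \<phi> (rank n (\<lambda>i. g (y i)) i) = z i * \<phi> (rank n y i)" by simp
qed


theorem lemma4:
  fixes n :: nat and z :: "nat \<Rightarrow> real" and y y' :: "nat \<Rightarrow> ereal"
    and a b :: real and \<phi> :: "nat \<Rightarrow> real"
  assumes "n \<ge> 1"
    and "mono \<phi>"
    and "\<forall>i\<in>{1..n}. z i \<in> {0, 1}"
    and "\<forall>i\<in>{1..n}. z i = 1 \<longrightarrow> y i \<le> y' i"
    and "\<forall>i\<in>{1..n}. z i = 0 \<longrightarrow> y i \<ge> y' i"
    and "a > 0" and "b > 0"
  shows "let \<gamma> = gamma_lo n y y' a; \<zeta> = zeta_hi n y y' b;
             yt = replace_inf \<gamma> \<zeta> y; yt' = replace_inf \<gamma> \<zeta> y'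
         in (\<forall>i\<in>{1..n}. (z i = 1 \<longrightarrow> yt i \<le> yt' i) \<and> (z i = 0 \<longrightarrow> yt i \<ge> yt' i))
          \<and> t_R \<phi> n z y = t_R \<phi> n z yt \<and> t_R \<phi> n z y' = t_R \<phi> n z yt'
          \<and> t_R \<phi> n z y \<le> t_R \<phi> n z y'"
proof -
  define F where "F = finite_vals n y y'"
  define \<gamma> where "\<gamma> = gamma_lo n y y' a"
  define \<zeta> where "\<zeta> = zeta_hi n y y' b"
  define G where "G x = (if x = -\<infinity> then \<gamma> else if x = \<infinity> then \<zeta> else real_of_ereal x)" for x
  define Y where "Y = y ` {1..n} \<union> y' ` {1..n}"
  have finF: "finite F"
  proof (rule finite_subset)
    show "F \<subseteq> (\<lambda>i. real_of_ereal (y i)) ` {1..n} \<union> (\<lambda>i. real_of_ereal (y' i)) ` {1..n}"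
      unfolding F_def finite_vals_def by blast
  qed simp
  have inF: "real_of_ereal x \<in> F" if xY: "x \<in> Y" and xf: "\<bar>x\<bar> \<noteq> \<infinity>" for x
  proof -
    obtain i where i: "i \<in> {1..n}" "x = y i \<or> x = y' i" using xY unfolding Y_def by blast
    from i(2) show ?thesis
    proof
      assume "x = y i" then show ?thesis using i(1) xf unfolding F_def finite_vals_def by auto
    next
      assume "x = y' i" then show ?thesis using i(1) xf unfolding F_def finite_vals_def by auto
    qed
  qed
  have gF: "\<gamma> < r" if "r \<in> F" for r
  proof -
    have "Min F \<le> r" using finF that by simp
    then show ?thesis using that assms(6) unfolding \<gamma>_def gamma_lo_def F_def[symmetric] by auto
  qed
  have zF: "r < \<zeta>" if "r \<in> F" for r
  proof -
    have "r \<le> Max F" using finF that by simp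
    then show ?thesis using that assms(7) unfolding \<zeta>_def zeta_hi_def F_def[symmetric] by auto
  qed
  have gz: "\<gamma> < \<zeta>"
  proof (cases "F = {}")
    case True then show ?thesis using assms(6,7)
      unfolding \<gamma>_def gamma_lo_def \<zeta>_def zeta_hi_def F_def[symmetric] by auto
  next
    case False
    then obtain r where "r \<in> F" by auto
    then show ?thesis using gF zF by fastforce
  qed
  have smono: "G u < G v" if "u \<in> Y" "v \<in> Y" "u < v" for u v
  proof -
    have fu: "\<bar>u\<bar> \<noteq> \<infinity> \<Longrightarrow> real_of_ereal u \<in> F" using inF that by auto
    have fv: "\<bar>v\<bar> \<noteq> \<infinity> \<Longrightarrow> real_of_ereal v \<in> F" using inF that by auto
    show ?thesis
    proof (cases u rule: ereal_cases)
      case (real r)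
      then show ?thesis
      proof (cases v rule: ereal_cases)
        case (real s) then show ?thesis using \<open>u = ereal r\<close> that by (simp add: G_def)
      next
        case PInf then show ?thesis using \<open>u = ereal r\<close> fu zF by (simp add: G_def)
      next
        case MInf then show ?thesis using \<open>u = ereal r\<close> that by simp
      qed
    next
      case PInf then show ?thesis using that by simp
    next
      case MInf
      then show ?thesis
      proof (cases v rule: ereal_cases)
        case (real s) then show ?thesis using MInf fv gF by (simp add: G_def)
      next
        case PInf then show ?thesis using MInf gz by (simp add: G_def)
      next
        case MInf then show ?thesis using \<open>u = -\<infinity>\<close> that by simp
      qed
    qed
  qed
  have mono': "G u \<le> G v" if "u \<in> Y" "v \<in> Y" "u \<le> v" for u v
    using smono[OF that(1,2)] that(3) by (cases "u = v") (auto simp: order.strict_iff_order)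
  have yt: "replace_inf \<gamma> \<zeta> y = (\<lambda>i. G (y i))" "replace_inf \<gamma> \<zeta> y' = (\<lambda>i. G (y' i))"
    unfolding replace_inf_def G_def by auto
  have A: "\<forall>i\<in>{1..n}. (z i = 1 \<longrightarrow> G (y i) \<le> G (y' i)) \<and> (z i = 0 \<longrightarrow> G (y i) \<ge> G (y' i))"
  proof
    fix i assume i: "i \<in> {1..n}"
    have yY: "y i \<in> Y" and yY': "y' i \<in> Y" using i unfolding Y_def by auto
    have 1: "z i = 1 \<longrightarrow> G (y i) \<le> G (y' i)"
    proof
      assume "z i = 1"
      then have "y i \<le> y' i" using assms(4) i by simp
      then show "G (y i) \<le> G (y' i)" by (rule mono'[OF yY yY'])
    qed
    have 2: "z i = 0 \<longrightarrow> G (y i) \<ge> G (y' i)"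
    proof
      assume "z i = 0"
      then have "y' i \<le> y i" using assms(5) i by simp
      then show "G (y' i) \<le> G (y i)" by (rule mono'[OF yY' yY])
    qed
    show "(z i = 1 \<longrightarrow> G (y i) \<le> G (y' i)) \<and> (z i = 0 \<longrightarrow> G (y i) \<ge> G (y' i))"
      using 1 2 by (rule conjI)
  qed
  have B1: "t_R \<phi> n z (\<lambda>i. G (y i)) = t_R \<phi> n z y"
    by (rule t_R_comp) (intro ballI impI smono, auto simp: Y_def)
  have B2: "t_R \<phi> n z (\<lambda>i. G (y' i)) = t_R \<phi> n z y'"
    by (rule t_R_comp) (intro ballI impI smono, auto simp: Y_def)
  have C: "t_R \<phi> n z y \<le> t_R \<phi> n z y'"
    using t_R_mono[OF assms(2,3,4,5)] .
  show ?thesis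
    unfolding Let_def \<gamma>_def[symmetric] \<zeta>_def[symmetric] yt
  proof (intro conjI)
    show "t_R \<phi> n z y = t_R \<phi> n z (\<lambda>i. G (y i))" by (rule B1[symmetric])
    show "t_R \<phi> n z y' = t_R \<phi> n z (\<lambda>i. G (y' i))" by (rule B2[symmetric])
  qed (rule A, rule C)
qed

end
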